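(* Let $p,q,r,s\ge 0$ be integers with $3+p+q=3+r+s=:n$, and let $H$ be a dephased complex Hadamard matrix of order $n$ of the block form \[H=\begin{bmatrix}1&1&1&1^p&1^q\\ 1&a&b&x&y\\ 1&b&a&x&-y\\ (1^r)^T&z^T&z^T&A&B\\ (1^s)^T&w^T&-w^T&C&D\end{bmatrix},\] where $a,b\in\mathbb{C}$ have modulus $1$, $x\in\mathbb{C}^p$, $y\in\mathbb{C}^q$, $z\in\mathbb{C}^r$, $w\in\mathbb{C}^s$ are row vectors, and $A,B,C,D$ are complex matrices of sizes $r\times p$, $r\times q$, $s\times p$, $s\times q$. For a complex number $\alpha$ of modulus $1$, let $H(\alpha)$ be the matrix obtained from $H$ by replacing $y$ by $\alpha y$ (so $-y$ becomes $-\alpha y$) and $w$ by $\overline{\alpha}w$ (so $-w$ becomes $-\overline{\alpha}w$). Then $H(\alpha)$ is a complex Hadamard matrix for every unimodular $\alpha$. If moreover $b=a$, then for all unimodular $\alpha,\gamma$ the matrix obtained from $H$ by replacing $y$ by $\alpha y$ and $w$ by $\gamma w$ is a complex Hadamard matrix.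
   Context: A complex Hadamard matrix of order $n$ is an $n\times n$ complex matrix with all entries of modulus $1$ satisfying $HH^\ast=nI_n$; it is dephased if its first row and first column consist of $1$'s. $1^k$ denotes the all-ones row vector of length $k$ and $^T$ denotes transpose. *)

theory Defs
  imports "Jordan_Normal_Form.Schur_Decomposition"
begin

definition complex_hadamard :: "nat \<Rightarrow> complex mat \<Rightarrow> bool" where
  "complex_hadamard n H \<longleftrightarrow> H \<in> carrier_mat n n \<and>
     (\<forall>i<n. \<forall>j<n. cmod (H $$ (i,j)) = 1) \<and>
     H * mat_adjoint H = of_nat n \<cdot>\<^sub>m 1\<^sub>m n"

text \<open>Rows: 0, 1, 2, then 3..3+r-1, then 3+r..; columns: 0, 1, 2,
  then 3..3+p-1, then 3+p...\<close>
definition block_mat ::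
  "nat \<Rightarrow> nat \<Rightarrow> nat \<Rightarrow> nat \<Rightarrow> complex \<Rightarrow> complex \<Rightarrow>
   complex vec \<Rightarrow> complex vec \<Rightarrow> complex vec \<Rightarrow> complex vec \<Rightarrow>
   complex mat \<Rightarrow> complex mat \<Rightarrow> complex mat \<Rightarrow> complex mat \<Rightarrow> complex mat" where
  "block_mat p q r s a b x y z w A B C D =
     mat (3+p+q) (3+p+q) (\<lambda>(i,j).
       if i = 0 then 1
       else if i = 1 then
         (if j = 0 then 1 else if j = 1 then a else if j = 2 then b
          else if j < 3+p then x $ (j-3) else y $ (j-3-p))
       else if i = 2 then
         (if j = 0 then 1 else if j = 1 then b else if j = 2 then a
          else if j < 3+p then x $ (j-3) else - (y $ (j-3-p)))
       else if i < 3+r then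
         (if j = 0 then 1 else if j = 1 then z $ (i-3) else if j = 2 then z $ (i-3)
          else if j < 3+p then A $$ (i-3, j-3) else B $$ (i-3, j-3-p))
       else
         (if j = 0 then 1 else if j = 1 then w $ (i-3-r) else if j = 2 then - (w $ (i-3-r))
          else if j < 3+p then C $$ (i-3-r, j-3) else D $$ (i-3-r, j-3-p)))"

end

theory Submission
  imports Defs
begin

definition rc :: "nat \<Rightarrow> nat \<Rightarrow> nat" where
  "rc r i = (if i = 0 then 0 else if i \<le> 2 then 1 else if i < 3+r then 2 else 3)"

definition SS :: "(nat \<Rightarrow> nat \<Rightarrow> complex) \<Rightarrow> nat set \<Rightarrow> nat \<Rightarrow> nat \<Rightarrow> complex" where
  "SS h J i k = (\<Sum>j\<in>J. h i j * cnj (h k j))"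

lemma SS_split: assumes "n = 3+p+q"
  shows "SS h {..<n} i k = SS h {0} i k + SS h {1,2} i k + SS h {3..<3+p} i k + SS h {3+p..<n} i k"
proof -
  have e: "{..<n} = (({0} \<union> {1,2}) \<union> {3..<3+p}) \<union> {3+p..<n}" using assms by auto
  show ?thesis unfolding SS_def e
    by (subst sum.union_disjoint; auto)+
qed

lemma SS_scale: assumes "\<And>j. j\<in>J \<Longrightarrow> u i j = c" "\<And>j. j\<in>J \<Longrightarrow> u k j = d"
  shows "SS (\<lambda>i j. h i j * u i j) J i k = (c * cnj d) * SS h J i k"
  unfolding SS_def sum_distrib_left by (intro sum.cong refl) (simp add: assms mult_ac)

lemma unit_cnj: "cmod a = 1 \<Longrightarrow> a * cnj a = 1"
  by (metis complex_norm_square mult.commute of_real_1 power_one)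

lemma twist:
  fixes h :: "nat \<Rightarrow> nat \<Rightarrow> complex"
  assumes n: "n = 3+p+q" and rn: "3+r \<le> n"
  and al: "cmod \<alpha> = 1" and be: "cmod \<beta> = 1" and cond: "\<beta> = cnj \<alpha> \<or> a = b"
  and h20: "h 2 0 = h 1 0"
  and h2x: "\<And>j. 3 \<le> j \<Longrightarrow> j < 3+p \<Longrightarrow> h 2 j = h 1 j"
  and h2y: "\<And>j. 3+p \<le> j \<Longrightarrow> j < n \<Longrightarrow> h 2 j = - h 1 j"
  and h11: "h 1 1 = a" "h 1 2 = b" "h 2 1 = b" "h 2 2 = a"
  and hz: "\<And>i. i < 3+r \<Longrightarrow> i = 0 \<or> 3 \<le> i \<Longrightarrow> h i 2 = h i 1"
  and hw: "\<And>i. 3+r \<le> i \<Longrightarrow> i < n \<Longrightarrow> h i 2 = - h i 1"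
  and orth: "\<And>i k. i < n \<Longrightarrow> k < n \<Longrightarrow> i \<noteq> k \<Longrightarrow> SS h {..<n} i k = 0"
  and i: "i < n" and k: "k < n"
  shows "SS (\<lambda>i j. h i j * (if rc r i = 1 \<and> 3+p \<le> j then \<alpha>
            else if rc r i = 3 \<and> (j = 1 \<or> j = 2) then \<beta> else 1)) {..<n} i k = SS h {..<n} i k"
proof -
  define u where "u = (\<lambda>i j. if rc r i = 1 \<and> 3+p \<le> j then \<alpha>
            else if rc r i = 3 \<and> (j = 1 \<or> j = 2) then \<beta> else (1::complex))"
  define U where "U = (\<lambda>i. if rc r i = 3 then \<beta> else 1)"
  define V where "V = (\<lambda>i. if rc r i = 1 then \<alpha> else 1)"
  let ?g = "\<lambda>i j. h i j * u i j"
  have g0: "SS ?g {0} i k = (1 * cnj 1) * SS h {0} i k"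
    by (rule SS_scale) (auto simp: u_def)
  have g12: "SS ?g {1,2} i k = (U i * cnj (U k)) * SS h {1,2} i k"
    by (rule SS_scale) (auto simp: u_def U_def)
  have gx: "SS ?g {3..<3+p} i k = (1 * cnj 1) * SS h {3..<3+p} i k"
    by (rule SS_scale) (auto simp: u_def)
  have gy: "SS ?g {3+p..<n} i k = (V i * cnj (V k)) * SS h {3+p..<n} i k"
    by (rule SS_scale) (auto simp: u_def V_def)
  have aa: "\<alpha> * cnj \<alpha> = 1" "\<beta> * cnj \<beta> = 1" using al be unit_cnj by auto
  have key: "(U i * cnj (U k)) * SS h {1,2} i k + (V i * cnj (V k)) * SS h {3+p..<n} i k
        = SS h {1,2} i k + SS h {3+p..<n} i k"
  proof -
    define S0 where "S0 = SS h {0}"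
    define S12 where "S12 = SS h {1,2}"
    define Sx where "Sx = SS h {3..<3+p}"
    define Sy where "Sy = SS h {3+p..<n}"
    have T: "S0 i' k' + S12 i' k' + Sx i' k' + Sy i' k' = 0" if "i' < n" "k' < n" "i' \<noteq> k'" for i' k'
      using orth[OF that] SS_split[OF n, of h i' k'] by (simp add: S0_def S12_def Sx_def Sy_def)
    have e0: "S0 2 m = S0 1 m" "S0 m 2 = S0 m 1" for m
      by (simp_all add: S0_def SS_def h20)
    have ex: "Sx 2 m = Sx 1 m" "Sx m 2 = Sx m 1" for m
      by (simp_all add: Sx_def SS_def h2x)
    have ey: "Sy 2 m = - Sy 1 m" "Sy m 2 = - Sy m 1" for m
      by (simp_all add: Sy_def SS_def h2y sum_negf[symmetric])
    have e12: "S12 1 m = a * cnj (h m 1) + b * cnj (h m 2)"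
      "S12 2 m = b * cnj (h m 1) + a * cnj (h m 2)"
      "S12 m 1 = h m 1 * cnj a + h m 2 * cnj b"
      "S12 m 2 = h m 1 * cnj b + h m 2 * cnj a" for m
      using h11 by (simp_all add: S12_def SS_def)
    have DA: "Sy 1 m = 0 \<and> Sy 2 m = 0 \<and> Sy m 1 = 0 \<and> Sy m 2 = 0"
      if "m < 3+r" "m \<noteq> 1" "m \<noteq> 2" for m
    proof -
      have mn: "m < n" using that rn by simp
      have "m = 0 \<or> 3 \<le> m" using that by auto
      hence hm: "h m 2 = h m 1" using hz that by auto
      have "2 * Sy 1 m = (S0 1 m + S12 1 m + Sx 1 m + Sy 1 m) - (S0 2 m + S12 2 m + Sx 2 m + Sy 2 m)"
        using e0 ex ey e12 hm by (simp add: algebra_simps)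
      also have "\<dots> = 0" using T[of 1 m] T[of 2 m] mn n that by simp
      finally have 1: "Sy 1 m = 0" by simp
      have "2 * Sy m 1 = (S0 m 1 + S12 m 1 + Sx m 1 + Sy m 1) - (S0 m 2 + S12 m 2 + Sx m 2 + Sy m 2)"
        using e0 ex ey e12 hm by (simp add: algebra_simps)
      also have "\<dots> = 0" using T[of m 1] T[of m 2] mn n that by simp
      finally have 2: "Sy m 1 = 0" by simp
      show ?thesis using 1 2 ey by simp
    qed
    have DB: "S12 1 m + Sy 1 m = 0 \<and> S12 2 m + Sy 2 m = 0 \<and> S12 m 1 + Sy m 1 = 0 \<and> S12 m 2 + Sy m 2 = 0"
      if "3+r \<le> m" "m < n" for m
    proof -
      have m12: "m \<noteq> 1" "m \<noteq> 2" using that by auto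
      have hm: "h m 2 = - h m 1" using hw that by auto
      have "2 * (S0 1 m + Sx 1 m) = (S0 1 m + S12 1 m + Sx 1 m + Sy 1 m) + (S0 2 m + S12 2 m + Sx 2 m + Sy 2 m)"
        using e0 ex ey e12 hm by (simp add: algebra_simps)
      also have "\<dots> = 0" using T[of 1 m] T[of 2 m] that n m12 by simp
      finally have 1: "S0 1 m + Sx 1 m = 0" by (metis mult_eq_0_iff zero_neq_numeral)
      have "S12 1 m + Sy 1 m = (S0 1 m + S12 1 m + Sx 1 m + Sy 1 m) - (S0 1 m + Sx 1 m)" by (simp add: algebra_simps)
      also have "\<dots> = 0" using 1 T[of 1 m] that n m12 by simp
      finally have 1: "S12 1 m + Sy 1 m = 0" .
      have "2 * (S0 m 1 + Sx m 1) = (S0 m 1 + S12 m 1 + Sx m 1 + Sy m 1) + (S0 m 2 + S12 m 2 + Sx m 2 + Sy m 2)"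
        using e0 ex ey e12 hm by (simp add: algebra_simps)
      also have "\<dots> = 0" using T[of m 1] T[of m 2] that n m12 by simp
      finally have 2: "S0 m 1 + Sx m 1 = 0" by (metis mult_eq_0_iff zero_neq_numeral)
      have "S12 m 1 + Sy m 1 = (S0 m 1 + S12 m 1 + Sx m 1 + Sy m 1) - (S0 m 1 + Sx m 1)" by (simp add: algebra_simps)
      also have "\<dots> = 0" using 2 T[of m 1] that n m12 by simp
      finally have 2: "S12 m 1 + Sy m 1 = 0" .
      have "S12 2 m + Sy 2 m = - (S12 1 m + Sy 1 m)" "S12 m 2 + Sy m 2 = - (S12 m 1 + Sy m 1)"
        using e12 hm ey by (simp_all add: algebra_simps)
      thus ?thesis using 1 2 by (metis minus_zero)
    qed
    have DB': "S12 1 m = 0 \<and> S12 2 m = 0 \<and> S12 m 1 = 0 \<and> S12 m 2 = 0"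
      if "3+r \<le> m" "m < n" "a = b" for m
    proof -
      have hm: "h m 2 = - h m 1" using hw that by auto
      show ?thesis using e12 hm that by simp
    qed
    have DC: "S12 m l = 0 \<and> S12 l m = 0" if "3+r \<le> m" "m < n" "l < 3+r" "l = 0 \<or> 3 \<le> l" for m l
      using hw[of m] hz[of l] that by (simp add: S12_def SS_def)
    have cb: "cnj \<beta> = \<alpha>" if "\<beta> = cnj \<alpha>" using that by simp
    have "U i * cnj (U k) * S12 i k + V i * cnj (V k) * Sy i k = S12 i k + Sy i k"
    proof (cases "i = 1 \<or> i = 2")
      case ii: True
      show ?thesis
      proof (cases "k = 1 \<or> k = 2")
        case True
        have "U i = U k" "V i = V k" "V k = \<alpha>" "U k = 1" using True ii
          by (auto simp: U_def V_def rc_def)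
        then show ?thesis using aa by simp
      next
        case False
        show ?thesis
        proof (cases "k < 3+r")
          case True
          have "U i = 1" "U k = 1" "V k = 1" using True False ii by (auto simp: U_def V_def rc_def)
          then show ?thesis using DA[of k] True False ii by auto
        next
          case kk: False
          have "U i = 1" "U k = \<beta>" "V k = 1" "V i = \<alpha>" using kk False ii by (auto simp: U_def V_def rc_def)
          note uv = this
          show ?thesis using cond
          proof
            assume "\<beta> = cnj \<alpha>"
            hence "U i * cnj (U k) * S12 i k + V i * cnj (V k) * Sy i k = \<alpha> * (S12 i k + Sy i k)"
              using uv by (simp add: algebra_simps)
            then show ?thesis using DB[of k] kk k ii by auto
          next
            assume "a = b"
            then show ?thesis using DB[of k] DB'[of k] kk k ii by auto
          qed
        qed
      qed
    next
      case ni: False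
      show ?thesis
      proof (cases "k = 1 \<or> k = 2")
        case kk: True
        show ?thesis
        proof (cases "i < 3+r")
          case True
          have "U i = 1" "U k = 1" "V i = 1" using True kk ni by (auto simp: U_def V_def rc_def)
          then show ?thesis using DA[of i] ni True kk by auto
        next
          case ii: False
          have "U k = 1" "U i = \<beta>" "V i = 1" "V k = \<alpha>" using kk ii ni by (auto simp: U_def V_def rc_def)
          note uv = this
          show ?thesis using cond
          proof
            assume "\<beta> = cnj \<alpha>"
            hence "U i * cnj (U k) * S12 i k + V i * cnj (V k) * Sy i k = cnj \<alpha> * (S12 i k + Sy i k)"
              using uv by (simp add: algebra_simps)
            then show ?thesis using DB[of i] ii i kk by auto
          next
            assume "a = b"
            then show ?thesis using DB[of i] DB'[of i] ii i kk by auto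
          qed
        qed
      next
        case nk: False
        have io: "i = 0 \<or> 3 \<le> i" "k = 0 \<or> 3 \<le> k" using ni nk by auto
        have vv: "V i = 1" "V k = 1" using ni nk by (auto simp: V_def rc_def)
        show ?thesis
        proof (cases "3+r \<le> i")
          case True
          show ?thesis
          proof (cases "3+r \<le> k")
            case True
            have "U i = \<beta>" "U k = \<beta>" using True \<open>3+r \<le> i\<close> by (auto simp: U_def rc_def)
            then show ?thesis using vv aa by simp
          next
            case False
            have "S12 i k = 0" using DC[of i k] io i \<open>3+r \<le> i\<close> False by auto
            then show ?thesis using vv by simp
          qed
        next
          case False
          show ?thesis
          proof (cases "3+r \<le> k")
            case True
            have "S12 i k = 0" using DC[of k i] io k True False by auto
            then show ?thesis using vv by simp
          next
            case kk: False
            have "U i = 1" "U k = 1" using False kk by (auto simp: U_def rc_def)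
            then show ?thesis using vv by simp
          qed
        qed
      qed
    qed
    then show ?thesis by (simp add: S12_def Sy_def)
  qed
  have "SS ?g {..<n} i k = SS h {..<n} i k"
    unfolding SS_split[OF n, of ?g] SS_split[OF n, of h] g0 g12 gx gy
    using key by (simp add: algebra_simps)
  thus ?thesis by (simp add: u_def)
qed

lemma prod_entry:
  fixes M :: "complex mat"
  assumes "M \<in> carrier_mat n n" "i < n" "k < n"
  shows "(M * mat_adjoint M) $$ (i,k) = SS (\<lambda>i j. M$$(i,j)) {..<n} i k"
  using assms unfolding mat_adjoint_def SS_def
  by (auto simp: scalar_prod_def mat_of_rows_def lessThan_atLeast0 intro!: sum.cong)

lemma adj_carrier: "M \<in> carrier_mat n n \<Longrightarrow> mat_adjoint M \<in> carrier_mat n n"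
  unfolding mat_adjoint_def by auto

lemma main_gen:
  fixes p q r s n :: nat and a b :: complex
    and x y z w :: "complex vec" and A B C D :: "complex mat"
  assumes dims: "3+p+q = n" "3+r+s = n"
    and ab: "cmod a = 1" "cmod b = 1"
    and vecs: "x \<in> carrier_vec p" "y \<in> carrier_vec q" "z \<in> carrier_vec r" "w \<in> carrier_vec s"
    and mats: "A \<in> carrier_mat r p" "B \<in> carrier_mat r q" "C \<in> carrier_mat s p" "D \<in> carrier_mat s q"
    and H: "complex_hadamard n (block_mat p q r s a b x y z w A B C D)"
    and al: "cmod \<alpha> = 1" and be: "cmod \<beta> = 1" and cond: "\<beta> = cnj \<alpha> \<or> a = b"
  shows "complex_hadamard n (block_mat p q r s a b x (\<alpha> \<cdot>\<^sub>v y) z (\<beta> \<cdot>\<^sub>v w) A B C D)"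
proof -
  define M where "M = block_mat p q r s a b x y z w A B C D"
  define M' where "M' = block_mat p q r s a b x (\<alpha> \<cdot>\<^sub>v y) z (\<beta> \<cdot>\<^sub>v w) A B C D"
  define h where "h = (\<lambda>i j. M $$ (i,j))"
  define u where "u = (\<lambda>i j. if rc r i = 1 \<and> 3+p \<le> j then \<alpha>
            else if rc r i = 3 \<and> (j = 1 \<or> j = 2) then \<beta> else (1::complex))"
  have Mc: "M \<in> carrier_mat n n" "M' \<in> carrier_mat n n"
    using dims by (auto simp: M_def M'_def block_mat_def)
  have ent: "M' $$ (i,j) = h i j * u i j" if "i < n" "j < n" for i j
    using that dims vecs unfolding M'_def h_def M_def u_def block_mat_def
    by (auto simp: rc_def)
  have Hh: "M * mat_adjoint M = of_nat n \<cdot>\<^sub>m 1\<^sub>m n" "\<forall>i<n. \<forall>j<n. cmod (M $$ (i,j)) = 1"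
    using H unfolding complex_hadamard_def M_def by auto
  have orth: "SS h {..<n} i k = 0" if "i < n" "k < n" "i \<noteq> k" for i k
  proof -
    have "(M * mat_adjoint M) $$ (i,k) = 0" using Hh that by simp
    thus ?thesis using prod_entry[OF Mc(1) that(1,2)] by (simp add: h_def)
  qed
  have tw: "SS (\<lambda>i j. h i j * u i j) {..<n} i k = SS h {..<n} i k" if "i < n" "k < n" for i k
    unfolding u_def
  proof (rule twist[where a=a and b=b and r=r and p=p and q=q])
    show "n = 3+p+q" "3+r \<le> n" using dims by auto
  next
    show "h 2 0 = h 1 0" using dims by (simp add: h_def M_def block_mat_def)
  qed (use al be cond that dims vecs orth in \<open>auto simp: h_def M_def block_mat_def\<close>)
  have "M' * mat_adjoint M' = M * mat_adjoint M"
  proof (rule eq_matI)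
    fix i k assume "i < dim_row (M * mat_adjoint M)" "k < dim_col (M * mat_adjoint M)"
    hence ik: "i < n" "k < n" using Mc adj_carrier by auto
    have "SS (\<lambda>i j. M'$$(i,j)) {..<n} i k = SS (\<lambda>i j. h i j * u i j) {..<n} i k"
      unfolding SS_def using ent ik by (intro sum.cong refl) simp
    thus "(M' * mat_adjoint M') $$ (i,k) = (M * mat_adjoint M) $$ (i,k)"
      using prod_entry[OF Mc(1) ik] prod_entry[OF Mc(2) ik] tw[OF ik] by (simp add: h_def)
  qed (use adj_carrier[OF Mc(1)] adj_carrier[OF Mc(2)] Mc in auto)
  moreover have "cmod (M' $$ (i,j)) = 1" if "i < n" "j < n" for i j
    using ent[OF that] Hh(2) that al be by (simp add: h_def u_def norm_mult)
  ultimately show ?thesis using Mc Hh unfolding complex_hadamard_def M'_def by auto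
qed


theorem theorem1:
  fixes p q r s n :: nat and a b :: complex
    and x y z w :: "complex vec" and A B C D :: "complex mat"
  assumes dims: "3+p+q = n" "3+r+s = n"
    and ab: "cmod a = 1" "cmod b = 1"
    and vecs: "x \<in> carrier_vec p" "y \<in> carrier_vec q" "z \<in> carrier_vec r" "w \<in> carrier_vec s"
    and mats: "A \<in> carrier_mat r p" "B \<in> carrier_mat r q" "C \<in> carrier_mat s p" "D \<in> carrier_mat s q"
    and H: "complex_hadamard n (block_mat p q r s a b x y z w A B C D)"
  shows "(\<forall>\<alpha>. cmod \<alpha> = 1 \<longrightarrow>
           complex_hadamard n (block_mat p q r s a b x (\<alpha> \<cdot>\<^sub>v y) z (cnj \<alpha> \<cdot>\<^sub>v w) A B C D)) \<and>
         (b = a \<longrightarrow> (\<forall>\<alpha> \<gamma>. cmod \<alpha> = 1 \<longrightarrow> cmod \<gamma> = 1 \<longrightarrow>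
           complex_hadamard n (block_mat p q r s a b x (\<alpha> \<cdot>\<^sub>v y) z (\<gamma> \<cdot>\<^sub>v w) A B C D)))"
proof (intro conjI allI impI)
  fix \<alpha> assume "cmod \<alpha> = 1"
  then show "complex_hadamard n (block_mat p q r s a b x (\<alpha> \<cdot>\<^sub>v y) z (cnj \<alpha> \<cdot>\<^sub>v w) A B C D)"
    by (intro main_gen[OF dims ab vecs mats H]) auto
next
  fix \<alpha> \<gamma> :: complex assume "b = a" "cmod \<alpha> = 1" "cmod \<gamma> = 1"
  then show "complex_hadamard n (block_mat p q r s a b x (\<alpha> \<cdot>\<^sub>v y) z (\<gamma> \<cdot>\<^sub>v w) A B C D)"
    by (intro main_gen[OF dims ab vecs mats H]) auto
qed

end
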